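(* Let $\mathsf{Pk}$ be the finite set of packets and let $p$ be any ProbNetKAT program. Then for all $a,b \subseteq \mathsf{Pk}$, the limits defining the matrix semantics exist and \[ \mathcal{B}[\![p]\!]_{ab} = [\![p]\!](a)(\{b\}). \]
   Context: Fix finitely many fields $f_1,\dots,f_k$, each ranging over a finite set of natural numbers. A packet $\pi$ is a record assigning a value to each field; $\pi.f$ is the value of field $f$ and $\pi[f:=n]$ is $\pi$ with field $f$ updated to $n$. $\mathsf{Pk}$ is the finite set of all packets and $2^{\mathsf{Pk}}$ its powerset. Syntax. Predicates: $t ::= \mathsf{false} \mid \mathsf{true} \mid f=n \mid t \,\&\, u \mid t ; u \mid \neg t$ (disjunction, conjunction, negation). Programs: $p ::= t \mid f \leftarrow n \mid p \,\&\, q \mid p ; q \mid p \oplus_r q \mid p^*$ (filter, assignment, union/parallel composition, sequential composition, probabilistic choice with rational $r\in[0,1]$, iteration). Define $p^{(0)} := \mathsf{true}$ and $p^{(n+1)} := \mathsf{true} \,\&\, (p ; p^{(n)})$. Matrix semantics: $\mathcal{B}[\![p]\!] \in [0,1]^{2^{\mathsf{Pk}}\times 2^{\mathsf{Pk}}}$, with $[\varphi]\in\{0,1\}$ the Iverson bracket: $\mathcal{B}[\![\mathsf{false}]\!]_{ab}=[b=\emptyset]$; $\mathcal{B}[\![\mathsf{true}]\!]_{ab}=[a=b]$; $\mathcal{B}[\![f=n]\!]_{ab}=[b=\{\pi\in a : \pi.f=n\}]$; $\mathcal{B}[\![\neg t]\!]_{ab}=[b\subseteq a]\cdot \mathcal{B}[\![t]\!]_{a,a-b}$;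 $\mathcal{B}[\![f\leftarrow n]\!]_{ab}=[b=\{\pi[f:=n] : \pi\in a\}]$; $\mathcal{B}[\![p \,\&\, q]\!]_{ab}=\sum_{c,d}[c\cup d=b]\,\mathcal{B}[\![p]\!]_{ac}\,\mathcal{B}[\![q]\!]_{ad}$; $\mathcal{B}[\![p;q]\!]=\mathcal{B}[\![p]\!]\cdot\mathcal{B}[\![q]\!]$ (matrix product); $\mathcal{B}[\![p\oplus_r q]\!]=r\,\mathcal{B}[\![p]\!]+(1-r)\,\mathcal{B}[\![q]\!]$; $\mathcal{B}[\![p^*]\!]_{ab}=\lim_{n\to\infty}\mathcal{B}[\![p^{(n)}]\!]_{ab}$. Conjunction $t;u$ and disjunction $t\,\&\,u$ of predicates are interpreted as the corresponding program constructs. Denotational semantics: for a finite set $X$, $\mathcal{D}(X)$ is the set of probability distributions on $X$; $\delta_x$ is the Dirac distribution at $x$; for $g:X\to Y$, $\mathcal{D}(g)(\mu)=\mu\circ g^{-1}$ (pushforward); for $g:X\to\mathcal{D}(Y)$, $g^\dagger(\mu)(A)=\sum_{x\in X} g(x)(A)\,\mu(x)$; $\mu\times\nu$ is the product distribution. Order distributions on $2^{\mathsf{Pk}}$ by $\mu\sqsubseteq\nu$ iff $\mu(\{b : a\subseteq b\})\le\nu(\{b: a\subseteq b\})$ for all $a\subseteq\mathsf{Pk}$. Then $[\![p]\!]:2^{\mathsf{Pk}}\to\mathcal{D}(2^{\mathsf{Pk}})$ is: $[\![\mathsf{false}]\!](a)=\delta_\emptyset$; $[\![\mathsf{true}]\!](a)=\delta_a$;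 $[\![f=n]\!](a)=\delta_{\{\pi\in a:\pi.f=n\}}$; $[\![f\leftarrow n]\!](a)=\delta_{\{\pi[f:=n]:\pi\in a\}}$; $[\![\neg t]\!](a)=\mathcal{D}(\lambda b.\,a-b)([\![t]\!](a))$; $[\![p\,\&\,q]\!](a)=\mathcal{D}(\cup)([\![p]\!](a)\times[\![q]\!](a))$; $[\![p;q]\!](a)=[\![q]\!]^\dagger([\![p]\!](a))$; $[\![p\oplus_r q]\!](a)=r[\![p]\!](a)+(1-r)[\![q]\!](a)$; $[\![p^*]\!](a)=\bigsqcup_{n\in\mathbb{N}}[\![p^{(n)}]\!](a)$, the supremum of the $\sqsubseteq$-increasing chain. *)

theory Defs
  imports "HOL-Probability.Probability_Mass_Function"
begin

type_synonym 'f packet = "'f \<Rightarrow> nat"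

definition Pk :: "('f \<Rightarrow> nat set) \<Rightarrow> 'f packet set" where
  "Pk rng = {\<pi>. \<forall>f. \<pi> f \<in> rng f}"

datatype 'f pred =
    PFalse
  | PTrue
  | PTest 'f nat
  | POr "'f pred" "'f pred"
  | PAnd "'f pred" "'f pred"
  | PNot "'f pred"

datatype 'f prog =
    Filter "'f pred"
  | Assign 'f nat
  | Par "'f prog" "'f prog"
  | Seq "'f prog" "'f prog"
  | Choice rat "'f prog" "'f prog"
  | Star "'f prog"

fun iter :: "'f prog \<Rightarrow> nat \<Rightarrow> 'f prog" where
  "iter p 0 = Filter PTrue"
| "iter p (Suc n) = Par (Filter PTrue) (Seq p (iter p n))"

fun wf_prog :: "('f \<Rightarrow> nat set) \<Rightarrow> 'f prog \<Rightarrow> bool" where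
  "wf_prog rng (Filter t) = True"
| "wf_prog rng (Assign f n) = (n \<in> rng f)"
| "wf_prog rng (Par p q) = (wf_prog rng p \<and> wf_prog rng q)"
| "wf_prog rng (Seq p q) = (wf_prog rng p \<and> wf_prog rng q)"
| "wf_prog rng (Choice r p q) = (0 \<le> r \<and> r \<le> 1 \<and> wf_prog rng p \<and> wf_prog rng q)"
| "wf_prog rng (Star p) = wf_prog rng p"

fun star_bodies :: "'f prog \<Rightarrow> 'f prog set" where
  "star_bodies (Filter t) = {}"
| "star_bodies (Assign f n) = {}"
| "star_bodies (Par p q) = star_bodies p \<union> star_bodies q"
| "star_bodies (Seq p q) = star_bodies p \<union> star_bodies q"
| "star_bodies (Choice r p q) = star_bodies p \<union> star_bodies q"
| "star_bodies (Star p) = insert p (star_bodies p)"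

text \<open>Matrices indexed by subsets of P (the packet set); entries outside Pow P are irrelevant.\<close>
type_synonym 'f mat = "'f packet set \<Rightarrow> 'f packet set \<Rightarrow> real"

definition mId :: "'f mat" where
  "mId a b = of_bool (a = b)"

definition mUnion :: "'f packet set \<Rightarrow> 'f mat \<Rightarrow> 'f mat \<Rightarrow> 'f mat" where
  "mUnion P M N a b = (\<Sum>c\<in>Pow P. \<Sum>d\<in>Pow P. of_bool (c \<union> d = b) * M a c * N a d)"

definition mSeq :: "'f packet set \<Rightarrow> 'f mat \<Rightarrow> 'f mat \<Rightarrow> 'f mat" where
  "mSeq P M N a b = (\<Sum>c\<in>Pow P. M a c * N c b)"

definition mChoice :: "real \<Rightarrow> 'f mat \<Rightarrow> 'f mat \<Rightarrow> 'f mat" where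
  "mChoice r M N a b = r * M a b + (1 - r) * N a b"

fun mPow :: "'f packet set \<Rightarrow> 'f mat \<Rightarrow> nat \<Rightarrow> 'f mat" where
  "mPow P M 0 = mId"
| "mPow P M (Suc n) = mUnion P mId (mSeq P M (mPow P M n))"

fun Bpred :: "'f packet set \<Rightarrow> 'f pred \<Rightarrow> 'f mat" where
  "Bpred P PFalse a b = of_bool (b = {})"
| "Bpred P PTrue a b = mId a b"
| "Bpred P (PTest f n) a b = of_bool (b = {\<pi>\<in>a. \<pi> f = n})"
| "Bpred P (POr t u) a b = mUnion P (Bpred P t) (Bpred P u) a b"
| "Bpred P (PAnd t u) a b = mSeq P (Bpred P t) (Bpred P u) a b"
| "Bpred P (PNot t) a b = of_bool (b \<subseteq> a) * Bpred P t a (a - b)"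

fun B :: "'f packet set \<Rightarrow> 'f prog \<Rightarrow> 'f mat" where
  "B P (Filter t) = Bpred P t"
| "B P (Assign f n) = (\<lambda>a b. of_bool (b = (\<lambda>\<pi>. \<pi>(f := n)) ` a))"
| "B P (Par p q) = mUnion P (B P p) (B P q)"
| "B P (Seq p q) = mSeq P (B P p) (B P q)"
| "B P (Choice r p q) = mChoice (of_rat r) (B P p) (B P q)"
| "B P (Star p) = (\<lambda>a b. lim (\<lambda>n. mPow P (B P p) n a b))"

type_synonym 'f den = "'f packet set \<Rightarrow> 'f packet set pmf"

definition dUnion :: "'f den \<Rightarrow> 'f den \<Rightarrow> 'f den" where
  "dUnion D E a = map_pmf (\<lambda>(x, y). x \<union> y) (pair_pmf (D a) (E a))"

definition dSeq :: "'f den \<Rightarrow> 'f den \<Rightarrow> 'f den" where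
  "dSeq D E a = bind_pmf (D a) E"

definition dChoice :: "real \<Rightarrow> 'f den \<Rightarrow> 'f den \<Rightarrow> 'f den" where
  "dChoice r D E a = bind_pmf (bernoulli_pmf r) (\<lambda>c. if c then D a else E a)"

fun dPow :: "'f den \<Rightarrow> nat \<Rightarrow> 'f den" where
  "dPow D 0 = return_pmf"
| "dPow D (Suc n) = dUnion return_pmf (dSeq D (dPow D n))"

definition dle :: "'f packet set \<Rightarrow> 'f packet set pmf \<Rightarrow> 'f packet set pmf \<Rightarrow> bool" where
  "dle P \<mu> \<nu> \<longleftrightarrow> (\<forall>a. a \<subseteq> P \<longrightarrow>
      measure_pmf.prob \<mu> {b. a \<subseteq> b} \<le> measure_pmf.prob \<nu> {b. a \<subseteq> b})"

definition dsup :: "'f packet set \<Rightarrow> (nat \<Rightarrow> 'f packet set pmf) \<Rightarrow> 'f packet set pmf" where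
  "dsup P ch = (THE \<mu>. set_pmf \<mu> \<subseteq> Pow P \<and> (\<forall>n. dle P (ch n) \<mu>) \<and>
       (\<forall>\<nu>. set_pmf \<nu> \<subseteq> Pow P \<and> (\<forall>n. dle P (ch n) \<nu>) \<longrightarrow> dle P \<mu> \<nu>))"

fun dpred :: "'f pred \<Rightarrow> 'f den" where
  "dpred PFalse a = return_pmf {}"
| "dpred PTrue a = return_pmf a"
| "dpred (PTest f n) a = return_pmf {\<pi>\<in>a. \<pi> f = n}"
| "dpred (POr t u) a = dUnion (dpred t) (dpred u) a"
| "dpred (PAnd t u) a = dSeq (dpred t) (dpred u) a"
| "dpred (PNot t) a = map_pmf (\<lambda>b. a - b) (dpred t a)"

fun den :: "'f packet set \<Rightarrow> 'f prog \<Rightarrow> 'f den" where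
  "den P (Filter t) = dpred t"
| "den P (Assign f n) = (\<lambda>a. return_pmf ((\<lambda>\<pi>. \<pi>(f := n)) ` a))"
| "den P (Par p q) = dUnion (den P p) (den P q)"
| "den P (Seq p q) = dSeq (den P p) (den P q)"
| "den P (Choice r p q) = dChoice (of_rat r) (den P p) (den P q)"
| "den P (Star p) = (\<lambda>a. dsup P (\<lambda>n. dPow (den P p) n a))"

end

theory Submission
  imports Defs
begin

definition rep :: "'f packet set \<Rightarrow> 'f mat \<Rightarrow> 'f den \<Rightarrow> bool" where
  "rep P M D \<longleftrightarrow> (\<forall>a b. a \<subseteq> P \<longrightarrow> b \<subseteq> P \<longrightarrow> M a b = pmf (D a) b) \<and>
     (\<forall>a. a \<subseteq> P \<longrightarrow> set_pmf (D a) \<subseteq> Pow P)"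

definition up :: "'a set pmf \<Rightarrow> 'a set \<Rightarrow> real" where
  "up \<mu> x = measure_pmf.prob \<mu> {b. x \<subseteq> b}"

lemma prob_fin:
  assumes "finite S" "set_pmf \<mu> \<subseteq> S"
  shows "measure_pmf.prob \<mu> A = (\<Sum>x\<in>S. of_bool (x \<in> A) * pmf \<mu> x)"
proof -
  have "measure_pmf.prob \<mu> A = measure_pmf.prob \<mu> (A \<inter> set_pmf \<mu>)"
    by (simp add: measure_Int_set_pmf)
  also have "A \<inter> set_pmf \<mu> = (A \<inter> S) \<inter> set_pmf \<mu>" using assms by auto
  also have "measure_pmf.prob \<mu> \<dots> = measure_pmf.prob \<mu> (A \<inter> S)"
    by (simp add: measure_Int_set_pmf)
  also have "\<dots> = sum (pmf \<mu>) (A \<inter> S)"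
    using assms by (simp add: measure_measure_pmf_finite)
  also have "A \<inter> S = {x \<in> S. x \<in> A}" by auto
  also have "sum (pmf \<mu>) {x \<in> S. x \<in> A} = (\<Sum>x\<in>S. of_bool (x \<in> A) * pmf \<mu> x)"
    by (simp only: sum.inter_filter[OF assms(1)]) (intro sum.cong refl, simp)
  finally show ?thesis .
qed

lemma pmf_bind_fin:
  assumes "finite S" "set_pmf \<mu> \<subseteq> S"
  shows "pmf (bind_pmf \<mu> K) b = (\<Sum>c\<in>S. pmf \<mu> c * pmf (K c) b)"
  unfolding pmf_bind
  by (subst integral_measure_pmf_real[where A=S]) (use assms in \<open>auto simp: mult.commute\<close>)

lemma up_bind_fin:
  assumes "finite S" "set_pmf \<mu> \<subseteq> S" "\<And>c. c \<in> S \<Longrightarrow> set_pmf (K c) \<subseteq> S"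
  shows "up (bind_pmf \<mu> K) y = (\<Sum>c\<in>S. pmf \<mu> c * up (K c) y)"
proof -
  have s: "set_pmf (bind_pmf \<mu> K) \<subseteq> S" using assms by (auto simp: set_bind_pmf)
  have "up (bind_pmf \<mu> K) y = (\<Sum>b\<in>S. of_bool (y \<subseteq> b) * (\<Sum>c\<in>S. pmf \<mu> c * pmf (K c) b))"
    unfolding up_def by (simp add: prob_fin[OF assms(1) s] pmf_bind_fin[OF assms(1,2)])
  also have "\<dots> = (\<Sum>c\<in>S. pmf \<mu> c * (\<Sum>b\<in>S. of_bool (y \<subseteq> b) * pmf (K c) b))"
    unfolding sum_distrib_left by (subst sum.swap) (simp add: mult_ac)
  also have "\<dots> = (\<Sum>c\<in>S. pmf \<mu> c * up (K c) y)"
    unfolding up_def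
    by (intro sum.cong refl) (simp add: prob_fin[OF assms(1) assms(3)])
  finally show ?thesis .
qed

lemma rep_seq:
  assumes "finite P" "rep P M D" "rep P N E"
  shows "rep P (mSeq P M N) (dSeq D E)"
  unfolding rep_def
proof safe
  fix a b assume ab: "a \<subseteq> P" "b \<subseteq> P"
  have s: "set_pmf (D a) \<subseteq> Pow P" using assms(2) ab by (simp add: rep_def)
  have Ma: "\<And>c. c \<subseteq> P \<Longrightarrow> M a c = pmf (D a) c" using assms(2) ab by (simp add: rep_def)
  have Nc: "\<And>c. c \<subseteq> P \<Longrightarrow> N c b = pmf (E c) b" using assms(3) ab by (simp add: rep_def)
  show "mSeq P M N a b = pmf (dSeq D E a) b"
    unfolding mSeq_def dSeq_def pmf_bind_fin[OF finite_Pow_iff[THEN iffD2, OF assms(1)] s]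
    by (intro sum.cong refl) (simp add: Ma Nc)
next
  fix a x y assume a: "a \<subseteq> P" and x: "x \<in> set_pmf (dSeq D E a)" and y: "y \<in> x"
  have s1: "set_pmf (D a) \<subseteq> Pow P" using assms(2) a by (simp add: rep_def)
  have s2: "\<And>c. c \<subseteq> P \<Longrightarrow> set_pmf (E c) \<subseteq> Pow P" using assms(3) by (simp add: rep_def)
  from x obtain c where "c \<in> set_pmf (D a)" "x \<in> set_pmf (E c)" unfolding dSeq_def set_bind_pmf by blast
  then show "y \<in> P" using s1 s2[of c] y by blast
qed

lemma dUnion_eq: "dUnion D E a = bind_pmf (D a) (\<lambda>c. bind_pmf (E a) (\<lambda>d. return_pmf (c \<union> d)))"
  unfolding dUnion_def pair_pmf_def map_bind_pmf by (simp add: map_return_pmf)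

lemma rep_union:
  assumes "finite P" "rep P M D" "rep P N E"
  shows "rep P (mUnion P M N) (dUnion D E)"
  unfolding rep_def
proof safe
  fix a b assume ab: "a \<subseteq> P" "b \<subseteq> P"
  have s: "set_pmf (D a) \<subseteq> Pow P" "set_pmf (E a) \<subseteq> Pow P" using assms(2,3) ab by (simp_all add: rep_def)
  have "pmf (dUnion D E a) b = (\<Sum>c\<in>Pow P. pmf (D a) c * (\<Sum>d\<in>Pow P. pmf (E a) d * of_bool (c \<union> d = b)))"
    unfolding dUnion_eq pmf_bind_fin[OF finite_Pow_iff[THEN iffD2, OF assms(1)] s(1)]
      pmf_bind_fin[OF finite_Pow_iff[THEN iffD2, OF assms(1)] s(2)] pmf_return
    by (simp add: indicator_def of_bool_def)
  also have "\<dots> = mUnion P M N a b"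
  proof -
    have Ma: "\<And>c. c \<subseteq> P \<Longrightarrow> M a c = pmf (D a) c" and Na: "\<And>c. c \<subseteq> P \<Longrightarrow> N a c = pmf (E a) c"
      using assms(2,3) ab by (simp_all add: rep_def)
    show ?thesis unfolding mUnion_def sum_distrib_left
      by (intro sum.cong refl) (simp add: Ma Na)
  qed
  finally show "mUnion P M N a b = pmf (dUnion D E a) b" ..
next
  fix a x y assume a: "a \<subseteq> P" and x: "x \<in> set_pmf (dUnion D E a)" and y: "y \<in> x"
  have s1: "set_pmf (D a) \<subseteq> Pow P" using assms(2) a by (simp add: rep_def)
  have s2: "set_pmf (E a) \<subseteq> Pow P" using assms(3) a by (simp add: rep_def)
  from x obtain c d where "c \<in> set_pmf (D a)" "d \<in> set_pmf (E a)" "x = c \<union> d"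
    unfolding dUnion_eq set_bind_pmf by auto
  then show "y \<in> P" using s1 s2 y by blast
qed

lemma rep_choice:
  assumes "rep P M D" "rep P N E" "0 \<le> r" "r \<le> 1"
  shows "rep P (mChoice r M N) (dChoice r D E)"
  unfolding rep_def
proof safe
  fix a b assume ab: "a \<subseteq> P" "b \<subseteq> P"
  have "pmf (dChoice r D E a) b = (\<Sum>c\<in>UNIV. pmf (if c then D a else E a) b * pmf (bernoulli_pmf r) c)"
    unfolding dChoice_def pmf_bind
    by (subst integral_measure_pmf_real[where A=UNIV]) auto
  also have "\<dots> = mChoice r M N a b"
  proof -
    have "M a b = pmf (D a) b" "N a b = pmf (E a) b" using assms(1,2) ab by (simp_all add: rep_def)
    then show ?thesis using assms(3,4) by (simp add: UNIV_bool mChoice_def)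
  qed
  finally show "mChoice r M N a b = pmf (dChoice r D E a) b" ..
next
  fix a x y assume a: "a \<subseteq> P" and x: "x \<in> set_pmf (dChoice r D E a)" and y: "y \<in> x"
  have s1: "set_pmf (D a) \<subseteq> Pow P" using assms(1) a by (simp add: rep_def)
  have s2: "set_pmf (E a) \<subseteq> Pow P" using assms(2) a by (simp add: rep_def)
  from x have "x \<in> set_pmf (D a) \<union> set_pmf (E a)" unfolding dChoice_def set_bind_pmf
    by (auto split: if_splits)
  then show "y \<in> P" using s1 s2 y by blast
qed

lemma rep_id: "rep P mId return_pmf"
  by (auto simp: rep_def mId_def indicator_def)

lemma rep_pow: assumes "finite P" "rep P M D" shows "rep P (mPow P M n) (dPow D n)"
proof (induction n)
  case 0 show ?case by (simp add: rep_id)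
next
  case (Suc n) show ?case
    by (simp only: mPow.simps dPow.simps) (intro rep_union rep_seq rep_id assms Suc.IH)
qed

lemma up_ge0: "0 \<le> up \<mu> x" by (simp add: up_def)
lemma up_le1: "up \<mu> x \<le> 1" by (simp add: up_def)
lemma up_empty: "up \<mu> {} = 1" by (simp add: up_def)
lemma up_sub: "x \<subseteq> c \<Longrightarrow> up \<mu> (x - c) = 1"
proof -
  assume "x \<subseteq> c"
  then have "{b. x - c \<subseteq> b} = UNIV" by auto
  then show ?thesis by (simp add: up_def)
qed
lemma up_return: "up (return_pmf c) x = of_bool (x \<subseteq> c)" by (simp add: up_def indicator_def)

lemma up_union_ret: "up (dUnion return_pmf E c) x = up (E c) (x - c)"
proof -
  have e: "{y. x \<subseteq> c \<union> y} = {b. x - c \<subseteq> b}" by auto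
  show ?thesis unfolding up_def dUnion_def pair_return_pmf1 map_pmf_comp
    by (simp add: e)
qed

lemma up_mono:
  assumes "finite P" "rep P M D"
  shows "c \<subseteq> P \<Longrightarrow> up (dPow D n c) x \<le> up (dPow D (Suc n) c) x"
proof (induction n arbitrary: c x)
  case 0
  show ?case
  proof (cases "x \<subseteq> c")
    case True
    then show ?thesis by (simp add: up_union_ret up_sub up_return)
  next
    case False
    then show ?thesis by (simp add: up_return up_ge0)
  qed
next
  case (Suc n)
  have s: "set_pmf (D c) \<subseteq> Pow P" using assms Suc.prems by (auto simp: rep_def)
  have s2: "\<And>m c'. c' \<in> Pow P \<Longrightarrow> set_pmf (dPow D m c') \<subseteq> Pow P"
    using rep_pow[OF assms] by (auto simp: rep_def)
  have "up (dPow D (Suc n) c) x = (\<Sum>c'\<in>Pow P. pmf (D c) c' * up (dPow D n c') (x - c))"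
    by (simp only: dPow.simps up_union_ret dSeq_def, rule up_bind_fin) (use assms s s2 in auto)
  also have "\<dots> \<le> (\<Sum>c'\<in>Pow P. pmf (D c) c' * up (dPow D (Suc n) c') (x - c))"
    by (intro sum_mono mult_left_mono Suc.IH) auto
  also have "\<dots> = up (dPow D (Suc (Suc n)) c) x"
    by (simp only: dPow.simps(2)[of D "Suc n"] up_union_ret dSeq_def, rule up_bind_fin[symmetric]) (use assms s s2 in \<open>auto simp del: dPow.simps\<close>)
  finally show ?case .
qed

lemma up_sum:
  assumes "finite P" "set_pmf \<mu> \<subseteq> Pow P"
  shows "up \<mu> x = (\<Sum>c\<in>Pow P. of_bool (x \<subseteq> c) * pmf \<mu> c)"
  unfolding up_def prob_fin[OF finite_Pow_iff[THEN iffD2, OF assms(1)] assms(2)] by simp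

lemma up_decomp:
  assumes "finite P" "set_pmf \<mu> \<subseteq> Pow P" "b \<subseteq> P"
  shows "pmf \<mu> b = up \<mu> b - (\<Sum>c\<in>{c\<in>Pow P. b \<subset> c}. pmf \<mu> c)"
proof -
  have "up \<mu> b = (\<Sum>c\<in>{c\<in>Pow P. b \<subseteq> c}. pmf \<mu> c)"
    unfolding up_sum[OF assms(1,2)] sum.inter_filter[OF finite_Pow_iff[THEN iffD2, OF assms(1)]]
    by (intro sum.cong refl) simp
  also have "{c\<in>Pow P. b \<subseteq> c} = insert b {c\<in>Pow P. b \<subset> c}" using assms(3) by auto
  also have "sum (pmf \<mu>) \<dots> = pmf \<mu> b + (\<Sum>c\<in>{c\<in>Pow P. b \<subset> c}. pmf \<mu> c)"
    using assms(1) by (subst sum.insert) auto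
  finally show ?thesis by simp
qed

lemma card_less: "finite P \<Longrightarrow> b \<subset> c \<Longrightarrow> c \<subseteq> P \<Longrightarrow> card (P - c) < card (P - b)"
  by (intro psubset_card_mono) auto

lemma up_eq:
  assumes "finite P" "set_pmf \<mu> \<subseteq> Pow P" "set_pmf \<nu> \<subseteq> Pow P" "\<forall>x. x \<subseteq> P \<longrightarrow> up \<mu> x = up \<nu> x"
  shows "\<mu> = \<nu>"
proof (rule pmf_eqI)
  have *: "b \<subseteq> P \<Longrightarrow> pmf \<mu> b = pmf \<nu> b" for b
  proof (induction b rule: measure_induct_rule[of "\<lambda>b. card (P - b)"])
    case (less b)
    have cl: "\<And>c. c \<in> {c\<in>Pow P. b \<subset> c} \<Longrightarrow> card (P - c) < card (P - b)"
      using card_less[OF assms(1)] by blast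
    have "(\<Sum>c\<in>{c\<in>Pow P. b \<subset> c}. pmf \<mu> c) = (\<Sum>c\<in>{c\<in>Pow P. b \<subset> c}. pmf \<nu> c)"
      by (intro sum.cong refl less.IH cl) auto
    then show ?case using up_decomp[OF assms(1,2) less.prems] up_decomp[OF assms(1,3) less.prems]
      assms(4) less.prems by simp
  qed
  fix b show "pmf \<mu> b = pmf \<nu> b"
  proof (cases "b \<subseteq> P")
    case True then show ?thesis by (rule *)
  next
    case False
    then have "b \<notin> set_pmf \<mu>" "b \<notin> set_pmf \<nu>" using assms by auto
    then show ?thesis by (simp add: set_pmf_iff)
  qed
qed

lemma chain_lim:
  fixes \<mu> :: "nat \<Rightarrow> 'a set pmf"
  assumes fin: "finite P" and sup: "\<And>n. set_pmf (\<mu> n) \<subseteq> Pow P"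
    and mono: "\<And>n x. up (\<mu> n) x \<le> up (\<mu> (Suc n)) x"
  shows "\<exists>\<nu>. set_pmf \<nu> \<subseteq> Pow P \<and> (\<forall>b. (\<lambda>n. pmf (\<mu> n) b) \<longlonglongrightarrow> pmf \<nu> b)
     \<and> (\<forall>x. (\<lambda>n. up (\<mu> n) x) \<longlonglongrightarrow> up \<nu> x)"
proof -
  have inc: "incseq (\<lambda>n. up (\<mu> n) x)" for x by (rule incseq_SucI) (rule mono)
  have cup: "convergent (\<lambda>n. up (\<mu> n) x)" for x
  proof (rule Bseq_mono_convergent)
    show "Bseq (\<lambda>n. up (\<mu> n) x)"
      by (rule BseqI'[where K=1]) (simp add: up_ge0 up_le1)
    show "\<forall>m n. m \<le> n \<longrightarrow> up (\<mu> m) x \<le> up (\<mu> n) x" using inc[of x] by (auto simp: incseq_def)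
  qed
  have cp: "b \<subseteq> P \<Longrightarrow> convergent (\<lambda>n. pmf (\<mu> n) b)" for b
  proof (induction b rule: measure_induct_rule[of "\<lambda>b. card (P - b)"])
    case (less b)
    have cl: "\<And>c. c \<in> {c\<in>Pow P. b \<subset> c} \<Longrightarrow> card (P - c) < card (P - b)"
      using card_less[OF fin] by blast
    have "convergent (\<lambda>n. up (\<mu> n) b - (\<Sum>c\<in>{c\<in>Pow P. b \<subset> c}. pmf (\<mu> n) c))"
      by (intro convergent_diff cup convergent_sum less.IH cl) auto
    then show ?case using up_decomp[OF fin sup less.prems] by simp
  qed
  define f where "f b = (if b \<subseteq> P then lim (\<lambda>n. pmf (\<mu> n) b) else 0)" for b
  have tf: "(\<lambda>n. pmf (\<mu> n) b) \<longlonglongrightarrow> f b" for b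
  proof (cases "b \<subseteq> P")
    case True then show ?thesis using cp[OF True] by (simp add: f_def convergent_LIMSEQ_iff)
  next
    case False
    then have "\<And>n. b \<notin> set_pmf (\<mu> n)" using sup by auto
    then show ?thesis using False by (simp add: f_def set_pmf_iff)
  qed
  have f0: "0 \<le> f b" for b
    by (rule LIMSEQ_le_const[OF tf]) simp
  have "(\<lambda>n. \<Sum>b\<in>Pow P. pmf (\<mu> n) b) \<longlonglongrightarrow> (\<Sum>b\<in>Pow P. f b)"
    by (intro tendsto_sum tf)
  moreover have "(\<lambda>n. \<Sum>b\<in>Pow P. pmf (\<mu> n) b) = (\<lambda>n. 1)"
    using fin sup by (simp add: sum_pmf_eq_1)
  ultimately have s1: "(\<Sum>b\<in>Pow P. f b) = 1"
    using LIMSEQ_unique tendsto_const by metis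
  have "(\<integral>\<^sup>+x. ennreal (f x) \<partial>count_space UNIV) = (\<Sum>x\<in>Pow P. ennreal (f x))"
    by (rule nn_integral_count_space') (use fin in \<open>auto simp: f_def\<close>)
  also have "\<dots> = ennreal (\<Sum>x\<in>Pow P. f x)" using f0 by simp
  also have "\<dots> = 1" using s1 by simp
  finally have int1: "(\<integral>\<^sup>+x. ennreal (f x) \<partial>count_space UNIV) = 1" .
  define \<nu> where "\<nu> = embed_pmf f"
  have pn: "pmf \<nu> b = f b" for b unfolding \<nu>_def by (rule pmf_embed_pmf[OF f0 int1])
  have sn: "set_pmf \<nu> \<subseteq> Pow P" by (auto simp: set_pmf_iff pn f_def split: if_splits)
  have tu: "(\<lambda>n. up (\<mu> n) x) \<longlonglongrightarrow> up \<nu> x" for x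
    unfolding up_sum[OF fin sup] up_sum[OF fin sn] pn
    by (intro tendsto_sum tendsto_mult_left tf)
  have tp: "(\<lambda>n. pmf (\<mu> n) b) \<longlonglongrightarrow> pmf \<nu> b" for b using tf[of b] by (simp add: pn)
  show ?thesis by (intro exI[of _ \<nu>] conjI allI sn tp tu)
qed

lemma star_rep:
  assumes fin: "finite P" and r: "rep P M D"
  shows "rep P (\<lambda>a b. lim (\<lambda>n. mPow P M n a b)) (\<lambda>a. dsup P (\<lambda>n. dPow D n a))
    \<and> (\<forall>a b. a \<subseteq> P \<longrightarrow> b \<subseteq> P \<longrightarrow> convergent (\<lambda>n. mPow P M n a b))"
proof -
  have main: "(\<forall>b. b \<subseteq> P \<longrightarrow> lim (\<lambda>n. mPow P M n a b) = pmf (dsup P (\<lambda>n. dPow D n a)) b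
       \<and> convergent (\<lambda>n. mPow P M n a b)) \<and> set_pmf (dsup P (\<lambda>n. dPow D n a)) \<subseteq> Pow P"
    if a: "a \<subseteq> P" for a
  proof -
    define \<mu> where "\<mu> = (\<lambda>n. dPow D n a)"
    have rp: "rep P (mPow P M n) (dPow D n)" for n by (rule rep_pow[OF fin r])
    have sup: "set_pmf (\<mu> n) \<subseteq> Pow P" for n
      using rp[of n] a unfolding rep_def \<mu>_def by simp
    have mP: "mPow P M n a b = pmf (\<mu> n) b" if "b \<subseteq> P" for n b
      using rp[of n] a that unfolding rep_def \<mu>_def by simp
    have mono: "up (\<mu> n) x \<le> up (\<mu> (Suc n)) x" for n x
      unfolding \<mu>_def by (rule up_mono[OF fin r a])
    obtain \<nu> where sn: "set_pmf \<nu> \<subseteq> Pow P" and tp: "\<And>b. (\<lambda>n. pmf (\<mu> n) b) \<longlonglongrightarrow> pmf \<nu> b"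
      and tu: "\<And>x. (\<lambda>n. up (\<mu> n) x) \<longlonglongrightarrow> up \<nu> x"
      using chain_lim[of P \<mu>, OF fin sup mono] by blast
    have inc: "incseq (\<lambda>n. up (\<mu> n) x)" for x by (rule incseq_SucI) (rule mono)
    have ubn: "\<forall>n. dle P (\<mu> n) \<nu>"
    proof
      fix n show "dle P (\<mu> n) \<nu>"
        unfolding dle_def using incseq_le[OF inc tu] by (simp add: up_def)
    qed
    have lubn: "\<forall>\<nu>'. set_pmf \<nu>' \<subseteq> Pow P \<and> (\<forall>n. dle P (\<mu> n) \<nu>') \<longrightarrow> dle P \<nu> \<nu>'"
    proof (intro allI impI)
      fix \<nu>' assume h: "set_pmf \<nu>' \<subseteq> Pow P \<and> (\<forall>n. dle P (\<mu> n) \<nu>')"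
      show "dle P \<nu> \<nu>'" unfolding dle_def
      proof (intro allI impI)
        fix x assume x: "x \<subseteq> P"
        have "\<forall>n. up (\<mu> n) x \<le> up \<nu>' x" using h x unfolding dle_def up_def by simp
        then have "up \<nu> x \<le> up \<nu>' x" by (intro LIMSEQ_le_const2[OF tu]) auto
        then show "measure_pmf.prob \<nu> {b. x \<subseteq> b} \<le> measure_pmf.prob \<nu>' {b. x \<subseteq> b}"
          by (simp add: up_def)
      qed
    qed
    let ?Q = "\<lambda>\<rho>. set_pmf \<rho> \<subseteq> Pow P \<and> (\<forall>n. dle P (\<mu> n) \<rho>) \<and>
       (\<forall>\<nu>. set_pmf \<nu> \<subseteq> Pow P \<and> (\<forall>n. dle P (\<mu> n) \<nu>) \<longrightarrow> dle P \<rho> \<nu>)"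
    have Qn: "?Q \<nu>" using sn ubn lubn by (intro conjI)
    have dq: "dsup P \<mu> = \<nu>"
      unfolding dsup_def
    proof (rule the_equality[of ?Q, OF Qn])
      fix \<rho> assume Q: "?Q \<rho>"
      have sr: "set_pmf \<rho> \<subseteq> Pow P" using Q by (rule conjunct1)
      have ub: "\<forall>n. dle P (\<mu> n) \<rho>" using Q by (elim conjE)
      have lub: "\<forall>\<nu>. set_pmf \<nu> \<subseteq> Pow P \<and> (\<forall>n. dle P (\<mu> n) \<nu>) \<longrightarrow> dle P \<rho> \<nu>" using Q by (elim conjE)
      have l1: "dle P \<rho> \<nu>" using lub sn ubn by simp
      have l2: "dle P \<nu> \<rho>" using lubn sr ub by simp
      have "\<forall>x. x \<subseteq> P \<longrightarrow> up \<rho> x = up \<nu> x"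
      proof (intro allI impI)
        fix x assume x: "x \<subseteq> P"
        have "up \<rho> x \<le> up \<nu> x" using l1 x unfolding dle_def up_def by simp
        moreover have "up \<nu> x \<le> up \<rho> x" using l2 x unfolding dle_def up_def by simp
        ultimately show "up \<rho> x = up \<nu> x" by linarith
      qed
      then show "\<rho> = \<nu>" by (rule up_eq[OF fin sr sn])
    qed
    have tb: "(\<lambda>n. mPow P M n a b) \<longlonglongrightarrow> pmf \<nu> b" if b: "b \<subseteq> P" for b
    proof -
      have "(\<lambda>n. mPow P M n a b) = (\<lambda>n. pmf (\<mu> n) b)" using mP[OF b] by simp
      then show ?thesis using tp[of b] by simp
    qed
    have dq': "dsup P (\<lambda>n. dPow D n a) = \<nu>" using dq unfolding \<mu>_def .
    show ?thesis
    proof (intro conjI allI impI)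
      fix b assume b: "b \<subseteq> P"
      show "lim (\<lambda>n. mPow P M n a b) = pmf (dsup P (\<lambda>n. dPow D n a)) b"
        unfolding dq' by (rule limI[OF tb[OF b]])
      show "convergent (\<lambda>n. mPow P M n a b)" using tb[OF b] unfolding convergent_def by blast
    next
      show "set_pmf (dsup P (\<lambda>n. dPow D n a)) \<subseteq> Pow P" unfolding dq' by (rule sn)
    qed
  qed
  show ?thesis
  proof
    show "rep P (\<lambda>a b. lim (\<lambda>n. mPow P M n a b)) (\<lambda>a. dsup P (\<lambda>n. dPow D n a))"
      unfolding rep_def using main by simp
    show "\<forall>a b. a \<subseteq> P \<longrightarrow> b \<subseteq> P \<longrightarrow> convergent (\<lambda>n. mPow P M n a b)"
      using main by simp
  qed
qed

lemma pmf_map_diff: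
  assumes "set_pmf \<mu> \<subseteq> Pow a"
  shows "pmf (map_pmf (\<lambda>c. a - c) \<mu>) b = of_bool (b \<subseteq> a) * pmf \<mu> (a - b)"
proof (cases "b \<in> (\<lambda>c. a - c) ` set_pmf \<mu>")
  case True
  then obtain c where c: "c \<in> set_pmf \<mu>" "b = a - c" by blast
  have ca: "c \<subseteq> a" using c(1) assms by blast
  have inj: "inj_on (\<lambda>c. a - c) (set_pmf \<mu>)"
  proof (rule inj_onI)
    fix x y assume xy: "x \<in> set_pmf \<mu>" "y \<in> set_pmf \<mu>" "a - x = a - y"
    have "x \<subseteq> a" "y \<subseteq> a" using xy(1,2) assms by blast+
    then have "x = a - (a - x)" "y = a - (a - y)" by auto
    then show "x = y" using xy(3) by simp
  qed
  have abc: "a - b = c" using c(2) ca by auto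
  have ba: "b \<subseteq> a" using c(2) by auto
  have "pmf (map_pmf (\<lambda>c. a - c) \<mu>) b = pmf \<mu> c"
    unfolding c(2) by (rule pmf_map_inj[OF inj c(1)])
  then show ?thesis using abc ba by simp
next
  case False
  then have "pmf (map_pmf (\<lambda>c. a - c) \<mu>) b = 0" by (rule pmf_map_outside)
  moreover have "b \<subseteq> a \<Longrightarrow> pmf \<mu> (a - b) = 0"
  proof -
    assume ba: "b \<subseteq> a"
    have aab: "a - (a - b) = b" using ba by auto
    have "a - b \<notin> set_pmf \<mu>"
    proof
      assume "a - b \<in> set_pmf \<mu>"
      then have "b \<in> (\<lambda>c. a - c) ` set_pmf \<mu>" using aab by (intro image_eqI[where x="a - b"]) simp_all
      with False show False by contradiction
    qed
    then show ?thesis by (simp add: set_pmf_iff)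
  qed
  ultimately show ?thesis by (cases "b \<subseteq> a") simp_all
qed

lemma Bpred_POr: "Bpred P (POr t u) = mUnion P (Bpred P t) (Bpred P u)" by (intro ext) simp
lemma Bpred_PAnd: "Bpred P (PAnd t u) = mSeq P (Bpred P t) (Bpred P u)" by (intro ext) simp
lemma dpred_POr: "dpred (POr t u) = dUnion (dpred t) (dpred u)" by (intro ext) simp
lemma dpred_PAnd: "dpred (PAnd t u) = dSeq (dpred t) (dpred u)" by (intro ext) simp
lemma Bpred_true: "Bpred P PTrue = mId" by (intro ext) simp

lemma pred_rep:
  assumes fin: "finite P"
  shows "rep P (Bpred P t) (dpred t) \<and> (\<forall>a. set_pmf (dpred t a) \<subseteq> Pow a)"
proof (induction t)
  case PFalse
  show ?case by (auto simp: rep_def indicator_def)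
next
  case PTrue
  show ?case by (auto simp: rep_def indicator_def mId_def)
next
  case (PTest f n)
  show ?case by (auto simp: rep_def indicator_def)
next
  case (POr t u)
  have r: "rep P (Bpred P (POr t u)) (dpred (POr t u))"
    unfolding Bpred_POr dpred_POr using POr fin by (intro rep_union) auto
  have "set_pmf (dpred (POr t u) a) \<subseteq> Pow a" for a
  proof
    fix x assume "x \<in> set_pmf (dpred (POr t u) a)"
    then obtain c d where "c \<in> set_pmf (dpred t a)" "d \<in> set_pmf (dpred u a)" "x = c \<union> d"
      unfolding dpred_POr dUnion_eq set_bind_pmf by auto
    then show "x \<in> Pow a" using POr by blast
  qed
  then show ?case using r by blast
next
  case (PAnd t u)
  have r: "rep P (Bpred P (PAnd t u)) (dpred (PAnd t u))"
    unfolding Bpred_PAnd dpred_PAnd using PAnd fin by (intro rep_seq) auto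
  have "set_pmf (dpred (PAnd t u) a) \<subseteq> Pow a" for a
  proof
    fix x assume "x \<in> set_pmf (dpred (PAnd t u) a)"
    then obtain c where "c \<in> set_pmf (dpred t a)" "x \<in> set_pmf (dpred u c)"
      unfolding dpred_PAnd dSeq_def set_bind_pmf by auto
    then show "x \<in> Pow a" using PAnd by blast
  qed
  then show ?case using r by blast
next
  case (PNot t)
  have st: "\<And>a. set_pmf (dpred t a) \<subseteq> Pow a" using PNot by blast
  have "rep P (Bpred P (PNot t)) (dpred (PNot t))"
    unfolding rep_def
  proof safe
    fix a b assume ab: "a \<subseteq> P" "b \<subseteq> P"
    have abP: "a - b \<subseteq> P" using ab by auto
    have "Bpred P t a (a - b) = pmf (dpred t a) (a - b)" using PNot ab(1) abP unfolding rep_def by blast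
    then show "Bpred P (PNot t) a b = pmf (dpred (PNot t) a) b"
      by (simp add: pmf_map_diff[OF st])
  next
    fix a x y assume "a \<subseteq> P" "x \<in> set_pmf (dpred (PNot t) a)" "y \<in> x"
    then show "y \<in> P" by (simp add: image_iff) blast
  qed
  moreover have "set_pmf (dpred (PNot t) a) \<subseteq> Pow a" for a by (simp add: image_subset_iff)
  ultimately show ?case by blast
qed

lemma wf_sub: "wf_prog rng p \<Longrightarrow> q \<in> star_bodies p \<Longrightarrow> wf_prog rng q"
  by (induction p) auto

lemma finite_Pk:
  fixes rng :: "'f::finite \<Rightarrow> nat set"
  assumes "\<forall>f. finite (rng f)"
  shows "finite (Pk rng)"
proof -
  have "Pk rng = PiE UNIV rng" by (auto simp: Pk_def PiE_def Pi_def extensional_def)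
  then show ?thesis using assms by (simp add: finite_PiE)
qed

lemma prog_rep:
  assumes fin: "finite (Pk rng)"
  shows "wf_prog rng p \<Longrightarrow> rep (Pk rng) (B (Pk rng) p) (den (Pk rng) p)"
proof (induction p)
  case (Filter t)
  then show ?case using pred_rep[OF fin, of t] by simp
next
  case (Assign f n)
  show ?case unfolding rep_def
  proof safe
    fix a b show "B (Pk rng) (Assign f n) a b = pmf (den (Pk rng) (Assign f n) a) b"
      by (auto simp: indicator_def)
  next
    fix a x y assume "a \<subseteq> Pk rng" "x \<in> set_pmf (den (Pk rng) (Assign f n) a)" "y \<in> x"
    then show "y \<in> Pk rng" using Assign by (auto simp: Pk_def)
  qed
next
  case (Par p q)
  have w: "wf_prog rng p" "wf_prog rng q" using Par.prems by simp_all
  show ?case using rep_union[OF fin Par.IH(1)[OF w(1)] Par.IH(2)[OF w(2)]] by simp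
next
  case (Seq p q)
  have w: "wf_prog rng p" "wf_prog rng q" using Seq.prems by simp_all
  show ?case using rep_seq[OF fin Seq.IH(1)[OF w(1)] Seq.IH(2)[OF w(2)]] by simp
next
  case (Choice r p q)
  have w: "wf_prog rng p" "wf_prog rng q" "0 \<le> r" "r \<le> 1" using Choice.prems by simp_all
  have r: "0 \<le> real_of_rat r" "real_of_rat r \<le> 1" using w(3,4) by simp_all
  show ?case using rep_choice[OF Choice.IH(1)[OF w(1)] Choice.IH(2)[OF w(2)] r] by simp
next
  case (Star p)
  have w: "wf_prog rng p" using Star.prems by simp
  show ?case using conjunct1[OF star_rep[OF fin Star.IH[OF w]]] by simp
qed

lemma B_iter: "B P (iter q n) = mPow P (B P q) n"
  by (induction n) (simp_all add: Bpred_true)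

theorem theorem3p1:
  fixes rng :: "'f::finite \<Rightarrow> nat set" and p :: "'f prog"
  assumes "\<forall>f. finite (rng f)"
    and "wf_prog rng p"
  shows "(\<forall>q\<in>star_bodies p. \<forall>a b. a \<subseteq> Pk rng \<longrightarrow> b \<subseteq> Pk rng \<longrightarrow>
            convergent (\<lambda>n. B (Pk rng) (iter q n) a b))
       \<and> (\<forall>a b. a \<subseteq> Pk rng \<longrightarrow> b \<subseteq> Pk rng \<longrightarrow>
            B (Pk rng) p a b = pmf (den (Pk rng) p a) b)"
proof
  have fin: "finite (Pk rng)" by (rule finite_Pk[OF assms(1)])
  show "\<forall>q\<in>star_bodies p. \<forall>a b. a \<subseteq> Pk rng \<longrightarrow> b \<subseteq> Pk rng \<longrightarrow>
            convergent (\<lambda>n. B (Pk rng) (iter q n) a b)"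
  proof (intro ballI allI impI)
    fix q a b assume q: "q \<in> star_bodies p" and ab: "a \<subseteq> Pk rng" "b \<subseteq> Pk rng"
    have "rep (Pk rng) (B (Pk rng) q) (den (Pk rng) q)"
      using prog_rep[OF fin wf_sub[OF assms(2) q]] .
    then have "\<forall>a b. a \<subseteq> Pk rng \<longrightarrow> b \<subseteq> Pk rng \<longrightarrow> convergent (\<lambda>n. mPow (Pk rng) (B (Pk rng) q) n a b)"
      by (rule conjunct2[OF star_rep[OF fin]])
    then show "convergent (\<lambda>n. B (Pk rng) (iter q n) a b)"
      unfolding B_iter using ab by simp
  qed
  show "\<forall>a b. a \<subseteq> Pk rng \<longrightarrow> b \<subseteq> Pk rng \<longrightarrow> B (Pk rng) p a b = pmf (den (Pk rng) p a) b"
    using prog_rep[OF fin assms(2)] by (simp add: rep_def)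
qed

end
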